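(* Let $A$ be an associative ring, $n\ge2$, $1\le k\le n-1$, $a\in A$. For any $\omega\in Br_n$ (viewed in $Br_n(A)$ via $y_i\mapsto y_i^0$), the element $\omega\, y_k^a (y_k^0)^{-1}\omega^{-1}\in Br_n(A)$ depends only on the image $\bar\omega$ of $\omega$ in $\mathcal S_n$. Moreover, if $\bar\omega(j)=k$ and $\bar\omega(j+1)=k+1$, then $\omega\, y_k^a (y_k^0)^{-1}\omega^{-1} = y_j^a (y_j^0)^{-1}$.
   Context: $Br_n(A)$ is the group generated by $y_i^a$, $1\le i\le n-1$, $a\in A$, with relations for all $a,b,c\in A$: $y_i^a y_i^0 y_i^b = y_i^0 y_i^0 y_i^{a+b}$; $y_i^a y_j^b = y_j^b y_i^a$ if $|i-j|\ge 2$; $y_i^a y_{i+1}^b y_i^c = y_{i+1}^c y_i^{b+ac} y_{i+1}^a$. $Br_n$ is the Artin braid group (generators $y_i$, relations $y_iy_j=y_jy_i$ for $|i-j|\ge 2$, $y_iy_{i+1}y_i=y_{i+1}y_iy_{i+1}$), identified with the subgroup of $Br_n(A)$ generated by the $y_i^0$; $\bar\omega$ denotes the image of $\omega$ under the surjection $Br_n\to\mathcal S_n$, $y_i\mapsto(i\ i+1)$. *)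

theory Defs
  imports Main "HOL-Combinatorics.Transposition"
begin

text \<open>Words in the generators of Br_n(A). A letter (e, i, a) stands for the generator
  y_i^a if e = False and for its inverse (y_i^a)^(-1) if e = True.\<close>

type_synonym 'a brletter = "bool \<times> nat \<times> 'a"

definition inv_letter :: "'a brletter \<Rightarrow> 'a brletter" where
  "inv_letter x = (\<not> fst x, snd x)"

definition inv_word :: "'a brletter list \<Rightarrow> 'a brletter list" where
  "inv_word w = rev (map inv_letter w)"

inductive br_eq :: "nat \<Rightarrow> ('a::ring) brletter list \<Rightarrow> 'a brletter list \<Rightarrow> bool"
  for n :: nat where
  refl: "br_eq n w w"
| sym: "br_eq n u v \<Longrightarrow> br_eq n v u"
| trans: "br_eq n u v \<Longrightarrow> br_eq n v w \<Longrightarrow> br_eq n u w"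
| ctx: "br_eq n u v \<Longrightarrow> br_eq n (p @ u @ q) (p @ v @ q)"
| cancel: "br_eq n [x, inv_letter x] []"
| rel1: "1 \<le> i \<Longrightarrow> i \<le> n - 1 \<Longrightarrow>
    br_eq n [(False, i, a), (False, i, 0), (False, i, b)]
            [(False, i, 0), (False, i, 0), (False, i, a + b)]"
| rel2: "1 \<le> i \<Longrightarrow> i \<le> n - 1 \<Longrightarrow> 1 \<le> j \<Longrightarrow> j \<le> n - 1 \<Longrightarrow>
    i + 2 \<le> j \<or> j + 2 \<le> i \<Longrightarrow>
    br_eq n [(False, i, a), (False, j, b)] [(False, j, b), (False, i, a)]"
| rel3: "1 \<le> i \<Longrightarrow> i + 1 \<le> n - 1 \<Longrightarrow>
    br_eq n [(False, i, a), (False, i + 1, b), (False, i, c)]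
            [(False, i + 1, c), (False, i, b + a * c), (False, i + 1, a)]"

text \<open>Words in the Artin braid group Br_n: (e, i) is y_i (e = False) or y_i^(-1) (e = True).\<close>

definition braid_word :: "nat \<Rightarrow> (bool \<times> nat) list \<Rightarrow> bool" where
  "braid_word n w \<longleftrightarrow> (\<forall>x \<in> set w. 1 \<le> snd x \<and> snd x \<le> n - 1)"

definition embed_braid :: "(bool \<times> nat) list \<Rightarrow> ('a::ring) brletter list" where
  "embed_braid w = map (\<lambda>(e, i). (e, i, 0)) w"

text \<open>Image in S_n (as a permutation of the naturals fixing everything outside {1..n}),
  y_i \<mapsto> (i i+1). Products are composed left to right: the first letter acts first.\<close>

definition braid_perm :: "(bool \<times> nat) list \<Rightarrow> nat \<Rightarrow> nat" where
  "braid_perm w = foldl (\<lambda>f x. transpose (snd x) (snd x + 1) \<circ> f) id w"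

definition conj_word :: "(bool \<times> nat) list \<Rightarrow> nat \<Rightarrow> ('a::ring) \<Rightarrow> 'a brletter list" where
  "conj_word w k a = embed_braid w @ [(False, k, a), (True, k, 0)] @ inv_word (embed_braid w)"

end

theory Submission
  imports Defs
begin


lemma inv_letter_inv[simp]: "inv_letter (inv_letter x) = x"
  by (simp add: inv_letter_def)

lemma inv_word_app[simp]: "inv_word (u @ v) = inv_word v @ inv_word u"
  by (simp add: inv_word_def)

lemma inv_word_inv[simp]: "inv_word (inv_word w) = w"
  by (simp add: inv_word_def rev_map comp_def)

lemma inv_word_nil[simp]: "inv_word [] = []"
  by (simp add: inv_word_def)

lemma inv_word_Cons[simp]: "inv_word (x # w) = inv_word w @ [inv_letter x]"
  by (simp add: inv_word_def)

lemma inv_letter_simp[simp]: "inv_letter (e, i, b) = (\<not> e, i, b)"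
  by (simp add: inv_letter_def)

lemmas [trans] = br_eq.trans

lemma br_app: "br_eq n u u' \<Longrightarrow> br_eq n v v' \<Longrightarrow> br_eq n (u @ v) (u' @ v')"
proof -
  assume a: "br_eq n u u'" and b: "br_eq n v v'"
  have "br_eq n ([] @ u @ v) ([] @ u' @ v)" by (rule br_eq.ctx[OF a])
  moreover have "br_eq n (u' @ v @ []) (u' @ v' @ [])" by (rule br_eq.ctx[OF b])
  ultimately show ?thesis by (metis append_Nil append_Nil2 br_eq.trans)
qed

lemma br_appL: "br_eq n v v' \<Longrightarrow> br_eq n (u @ v) (u @ v')"
  by (rule br_app[OF br_eq.refl])
lemma br_appR: "br_eq n u u' \<Longrightarrow> br_eq n (u @ v) (u' @ v)"
  by (rule br_app[OF _ br_eq.refl])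

lemma cancel_r: "br_eq n (w @ inv_word w) []"
proof (induction w)
  case Nil then show ?case by (simp add: br_eq.refl)
next
  case (Cons x w)
  have "br_eq n ([x] @ (w @ inv_word w) @ [inv_letter x]) ([x] @ [] @ [inv_letter x])"
    by (rule br_eq.ctx[OF Cons.IH])
  also have "[x] @ [] @ [inv_letter x] = [x, inv_letter x]" by simp
  also have "br_eq n \<dots> []" by (rule br_eq.cancel)
  finally show ?case by simp
qed

lemma cancel_l: "br_eq n (inv_word w @ w) []"
  using cancel_r[of n "inv_word w"] by simp

lemma cancel_mid: "br_eq n (u @ w @ inv_word w @ v) (u @ v)"
  using br_eq.ctx[OF cancel_r[of n w], of u v] by simp

lemma cancel_mid': "br_eq n (u @ inv_word w @ w @ v) (u @ v)"
  using br_eq.ctx[OF cancel_l[of n w], of u v] by simp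

lemma cancel_left: assumes "br_eq n (g @ u) (g @ v)" shows "br_eq n u v"
proof -
  have "br_eq n u (inv_word g @ g @ u)" using cancel_mid'[of n "[]" g u] by (simp add: br_eq.sym)
  also have "br_eq n \<dots> (inv_word g @ g @ v)" using br_appL[OF assms, of "inv_word g"] by simp
  also have "br_eq n \<dots> v" using cancel_mid'[of n "[]" g v] by simp
  finally show ?thesis .
qed

lemma cancel_right: assumes "br_eq n (u @ g) (v @ g)" shows "br_eq n u v"
proof -
  have "br_eq n u (u @ g @ inv_word g)" using cancel_mid[of n u g "[]"] by (simp add: br_eq.sym)
  also have "br_eq n \<dots> (v @ g @ inv_word g)" using br_appR[OF assms, of "inv_word g"] by simp
  also have "br_eq n \<dots> v" using cancel_mid[of n v g "[]"] by simp
  finally show ?thesis .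
qed

lemma inv_cong: assumes "br_eq n u v" shows "br_eq n (inv_word u) (inv_word v)"
proof -
  have "br_eq n (inv_word u) (inv_word u @ v @ inv_word v)" using cancel_mid[of n "inv_word u" v "[]"] by (simp add: br_eq.sym)
  also have "br_eq n \<dots> (inv_word u @ u @ inv_word v)" using br_appL[OF br_appR[OF br_eq.sym[OF assms]], of "inv_word u" "inv_word v"] .
  also have "br_eq n \<dots> (inv_word v)" using cancel_mid'[of n "[]" u "inv_word v"] by simp
  finally show ?thesis .
qed

definition cj :: "('a::ring) brletter list \<Rightarrow> 'a brletter list \<Rightarrow> 'a brletter list" where
  "cj g X = g @ X @ inv_word g"

lemma cj_nil[simp]: "cj [] X = X" by (simp add: cj_def)
lemma cj_append: "cj (g @ h) X = cj g (cj h X)" by (simp add: cj_def)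
lemma cj_inv: "cj g (inv_word u) = inv_word (cj g u)" by (simp add: cj_def)

lemma cj_cong: "br_eq n X Y \<Longrightarrow> br_eq n (cj g X) (cj g Y)"
  unfolding cj_def by (rule br_eq.ctx)

lemma cj_app: "br_eq n (cj g (u @ v)) (cj g u @ cj g v)"
  unfolding cj_def using cancel_mid[of n "g @ u" "inv_word g" "v @ inv_word g"]
  by (simp add: br_eq.sym)

lemma cj_of: assumes "br_eq n (g @ X) (Y @ g)" shows "br_eq n (cj g X) Y"
proof -
  have "br_eq n (cj g X) (Y @ g @ inv_word g)" unfolding cj_def using br_appR[OF assms, of "inv_word g"] by simp
  also have "br_eq n \<dots> Y" using cancel_mid[of n Y g "[]"] by simp
  finally show ?thesis .
qed

lemma cj_to: assumes "br_eq n (cj g X) Y" shows "br_eq n (g @ X) (Y @ g)"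
proof -
  have "br_eq n (g @ X) (cj g X @ g)" unfolding cj_def using cancel_mid'[of n "g @ X" g "[]"] by (simp add: br_eq.sym)
  also have "br_eq n \<dots> (Y @ g)" by (rule br_appR[OF assms])
  finally show ?thesis .
qed

lemma cj_move: assumes "br_eq n (cj g X) Y" shows "br_eq n X (cj (inv_word g) Y)"
proof -
  have "br_eq n X (cj (inv_word g) (cj g X))" unfolding cj_def
    using cancel_mid'[of n "[]" g "X @ inv_word g @ g"] cancel_mid'[of n X g "[]"]
    by simp (metis append_assoc br_eq.sym br_eq.trans)
  also have "br_eq n \<dots> (cj (inv_word g) Y)" by (rule cj_cong[OF assms])
  finally show ?thesis .
qed

lemma cj_cancel: "br_eq n (cj g (cj (inv_word g) X)) X"
proof -
  have "br_eq n (cj g (cj (inv_word g) X)) (X @ g @ inv_word g)"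
    unfolding cj_def using cancel_mid[of n "[]" g "X @ g @ inv_word g"] by simp
  also have "br_eq n \<dots> X" using cancel_mid[of n X g "[]"] by simp
  finally show ?thesis .
qed

definition comm :: "nat \<Rightarrow> ('a::ring) brletter list \<Rightarrow> 'a brletter list \<Rightarrow> bool" where
  "comm n u v \<longleftrightarrow> br_eq n (u @ v) (v @ u)"

lemma comm_sym: "comm n u v \<Longrightarrow> comm n v u" by (simp add: comm_def br_eq.sym)
lemma comm_nil[simp]: "comm n u []" by (simp add: comm_def br_eq.refl)

lemma comm_app: assumes "comm n u v" "comm n u w" shows "comm n u (v @ w)"
proof -
  have "br_eq n (u @ v @ w) (v @ u @ w)" using br_appR[OF assms(1)[unfolded comm_def], of w] by simp
  also have "br_eq n \<dots> (v @ w @ u)" using br_appL[OF assms(2)[unfolded comm_def], of v] by simp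
  finally show ?thesis by (simp add: comm_def)
qed

lemma comm_cj_eq: "comm n g X \<Longrightarrow> br_eq n (cj g X) X"
  by (rule cj_of) (simp add: comm_def)

lemma comm_of_cj: "br_eq n (cj g X) X \<Longrightarrow> comm n g X"
  unfolding comm_def by (rule cj_to)

lemma comm_inv: assumes "comm n u v" shows "comm n u (inv_word v)"
proof -
  have "br_eq n (cj v u) u" using comm_cj_eq[OF comm_sym[OF assms]] .
  then have "br_eq n u (cj (inv_word v) u)" by (rule cj_move)
  then have "comm n (inv_word v) u" by (intro comm_of_cj) (rule br_eq.sym)
  then show ?thesis by (rule comm_sym)
qed

lemma comm_cong: "br_eq n v v' \<Longrightarrow> comm n u v \<Longrightarrow> comm n u v'"
  unfolding comm_def by (meson br_appL br_appR br_eq.sym br_eq.trans)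

lemma comm_cj: "comm n u g \<Longrightarrow> comm n u Z \<Longrightarrow> comm n u (cj g Z)"
  unfolding cj_def by (intro comm_app comm_inv)

lemma comm_cj2: assumes "comm n u v" shows "comm n (cj g u) (cj g v)"
proof -
  have "br_eq n (cj g u @ cj g v) (cj g (u @ v))" by (rule br_eq.sym[OF cj_app])
  also have "br_eq n \<dots> (cj g (v @ u))" by (rule cj_cong[OF assms[unfolded comm_def]])
  also have "br_eq n \<dots> (cj g v @ cj g u)" by (rule cj_app)
  finally show ?thesis by (simp add: comm_def)
qed

lemma comm_letters: "(\<And>x y. x \<in> set u \<Longrightarrow> y \<in> set w \<Longrightarrow> comm n [x] [y]) \<Longrightarrow> comm n u w"
proof (induction u)
  case Nil then show ?case by (simp add: comm_sym)
next
  case (Cons x u)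
  have c1: "comm n [x] w"
    using Cons.prems
  proof (induction w)
    case Nil then show ?case by simp
  next
    case (Cons y w)
    have "comm n [x] ([y] @ w)" using Cons by (intro comm_app) auto
    then show ?case by simp
  qed
  have "comm n w [x]" "comm n w u" using c1 Cons by (auto intro: comm_sym)
  then have "comm n w ([x] @ u)" by (rule comm_app)
  then show ?case by (simp add: comm_sym)
qed

lemma comm_far: assumes "1 \<le> i" "i \<le> n - 1" "1 \<le> j" "j \<le> n - 1" "i + 2 \<le> j \<or> j + 2 \<le> i"
  shows "comm n [(e, i, a)] [(e', j, b)]"
proof -
  have base: "comm n [(False, i, a)] [(False, j, b)]" for a b
    using br_eq.rel2[OF assms] by (simp add: comm_def)
  have b2: "comm n [(False, i, a)] [(e', j, b)]" for a
    using base comm_inv[OF base[of a b]] by (cases e') auto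
  show ?thesis using comm_sym[OF comm_inv[OF comm_sym[OF b2]]] b2 by (cases e) auto
qed



abbreviation sw :: "nat \<Rightarrow> ('a::ring) brletter list" where "sw i \<equiv> [(False, i, 0)]"
definition xw :: "'a::ring \<Rightarrow> nat \<Rightarrow> 'a brletter list" where "xw a i = [(False, i, a), (True, i, 0)]"

lemma xw_split: "xw a i = [(False, i, a)] @ inv_word (sw i)"
  by (simp add: xw_def)

lemma cancel2: "br_eq n (u @ [(e, i, b), (\<not> e, i, b)] @ v) (u @ v)"
  using br_eq.ctx[OF br_eq.cancel[of n "(e, i, b)"], of u v] by simp

lemma cj_x: assumes "\<And>c. br_eq n (cj g [(False, i, c)]) [(False, j, c)]"
  shows "br_eq n (cj g (xw a i)) (xw a j)"
proof -
  have "br_eq n (cj g (xw a i)) (cj g [(False, i, a)] @ inv_word (cj g (sw i)))"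
    unfolding xw_split cj_inv[symmetric] by (rule cj_app)
  also have "br_eq n \<dots> ([(False, j, a)] @ inv_word (sw j))"
    by (intro br_app inv_cong assms)
  finally show ?thesis by (simp add: xw_split)
qed

lemma braid: assumes "1 \<le> i" "i + 1 \<le> n - 1"
  shows "br_eq n (sw i @ sw (i+1) @ sw i) (sw (i+1) @ sw i @ sw (i+1))"
  using br_eq.rel3[OF assms, of 0 0 0] by simp

lemma P3: assumes "1 \<le> i" "i + 1 \<le> n - 1"
  shows "br_eq n (cj (sw i @ sw (i+1)) (xw a i)) (xw a (i+1))"
proof (rule cj_x)
  fix c :: 'a
  show "br_eq n (cj (sw i @ sw (i+1)) [(False, i, c)]) [(False, i+1, c)]"
    by (rule cj_of) (use br_eq.rel3[OF assms, of 0 0 c] in simp)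
qed

lemma P4: assumes "1 \<le> i" "i + 1 \<le> n - 1"
  shows "br_eq n (cj (sw (i+1) @ sw i) (xw a (i+1))) (xw a i)"
proof (rule cj_x)
  fix c :: 'a
  show "br_eq n (cj (sw (i+1) @ sw i) [(False, i+1, c)]) [(False, i, c)]"
    by (rule cj_of) (use br_eq.sym[OF br_eq.rel3[OF assms, of c 0 0]] in simp)
qed

lemma P5: assumes "1 \<le> i" "i + 1 \<le> n - 1"
  shows "br_eq n (cj (sw (i+1)) (xw a i)) (cj (sw i) (xw a (i+1)))"
proof (rule cancel_right[where g = "sw (i+1) @ sw i @ sw (i+1)"])
  have "br_eq n (cj (sw (i+1)) (xw a i) @ sw (i+1) @ sw i @ sw (i+1))
     ([(False, i+1, 0), (False, i, a), (True, i, 0)] @ [(True, i+1, 0), (False, i+1, 0)] @ [(False, i, 0), (False, i+1, 0)])"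
    by (simp add: cj_def xw_def br_eq.refl)
  also have "br_eq n \<dots> ([(False, i+1, 0), (False, i, a)] @ [(True, i, 0), (False, i, 0)] @ [(False, i+1, 0)])"
    using cancel2[of n "[(False, i+1, 0), (False, i, a), (True, i, 0)]" True "i+1" 0 "[(False, i, 0), (False, i+1, 0)]"] by simp
  also have "br_eq n \<dots> [(False, i+1, 0), (False, i, a), (False, i+1, 0)]"
    using cancel2[of n "[(False, i+1, 0), (False, i, a)]" True i 0 "[(False, i+1, 0)]"] by simp
  also have "br_eq n \<dots> [(False, i, 0), (False, i+1, a), (False, i, 0)]"
    using br_eq.sym[OF br_eq.rel3[OF assms, of 0 a 0]] by simp
  also have "br_eq n \<dots> ([(False, i, 0), (False, i+1, a)] @ [(True, i+1, 0), (False, i+1, 0)] @ [(False, i, 0)])"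
    using br_eq.sym[OF cancel2[of n "[(False, i, 0), (False, i+1, a)]" True "i+1" 0 "[(False, i, 0)]"]] by simp
  also have "br_eq n \<dots> ([(False, i, 0), (False, i+1, a), (True, i+1, 0)] @ [(True, i, 0), (False, i, 0)] @ [(False, i+1, 0), (False, i, 0)])"
    using br_eq.sym[OF cancel2[of n "[(False, i, 0), (False, i+1, a), (True, i+1, 0)]" True i 0 "[(False, i+1, 0), (False, i, 0)]"]] by simp
  also have "\<dots> = cj (sw i) (xw a (i+1)) @ sw i @ sw (i+1) @ sw i"
    by (simp add: cj_def xw_def)
  also have "br_eq n \<dots> (cj (sw i) (xw a (i+1)) @ sw (i+1) @ sw i @ sw (i+1))"
    by (rule br_appL[OF braid[OF assms]])
  finally show "br_eq n (cj (sw (i+1)) (xw a i) @ sw (i+1) @ sw i @ sw (i+1))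
      (cj (sw i) (xw a (i+1)) @ sw (i+1) @ sw i @ sw (i+1))" .
qed

lemma P2: assumes "1 \<le> i" "i \<le> n - 1"
  shows "comm n (sw i @ sw i) (xw a i)"
proof -
  have y: "comm n (sw i @ sw i) [(False, i, a)]"
    using br_eq.sym[OF br_eq.rel1[OF assms, of a 0]] by (simp add: comm_def)
  have s: "comm n (sw i @ sw i) (sw i)" by (simp add: comm_def br_eq.refl)
  show ?thesis unfolding xw_split by (intro comm_app comm_inv y s)
qed

lemma sq_from: assumes "br_eq n (cj (inv_word g) X) (cj g X)" shows "comm n (g @ g) X"
proof -
  have "br_eq n X (cj g (cj g X))" using cj_move[OF assms] by simp
  then show ?thesis by (intro comm_of_cj) (simp add: cj_append br_eq.sym)
qed

lemma Q1: assumes "1 \<le> i" "i + 1 \<le> n - 1"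
  shows "comm n (sw (i+1) @ sw (i+1)) (xw a i)"
proof (rule sq_from)
  have "br_eq n (cj (inv_word (sw (i+1))) (xw a i)) (cj (inv_word (sw (i+1))) (cj (sw (i+1)) (cj (sw i) (xw a (i+1)))))"
    by (rule cj_cong, rule br_eq.sym, unfold cj_append[symmetric], rule P4[OF assms])
  also have "br_eq n \<dots> (cj (sw i) (xw a (i+1)))"
    using cj_cancel[of n "inv_word (sw (i+1))"] by simp
  also have "br_eq n \<dots> (cj (sw (i+1)) (xw a i))" by (rule br_eq.sym[OF P5[OF assms]])
  finally show "br_eq n (cj (inv_word (sw (i+1))) (xw a i)) (cj (sw (i+1)) (xw a i))" .
qed

lemma Q2: assumes "1 \<le> i" "i + 1 \<le> n - 1"
  shows "comm n (sw i @ sw i) (xw a (i+1))"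
proof (rule sq_from)
  have "br_eq n (cj (inv_word (sw i)) (xw a (i+1))) (cj (inv_word (sw i)) (cj (sw i) (cj (sw (i+1)) (xw a i))))"
    by (rule cj_cong, rule br_eq.sym, unfold cj_append[symmetric], rule P3[OF assms])
  also have "br_eq n \<dots> (cj (sw (i+1)) (xw a i))"
    using cj_cancel[of n "inv_word (sw i)"] by simp
  also have "br_eq n \<dots> (cj (sw i) (xw a (i+1)))" by (rule P5[OF assms])
  finally show "br_eq n (cj (inv_word (sw i)) (xw a (i+1))) (cj (sw i) (xw a (i+1)))" .
qed

lemma comm_congL: "br_eq n u u' \<Longrightarrow> comm n u v \<Longrightarrow> comm n u' v"
  by (meson comm_cong comm_sym)

lemma Q3: assumes "1 \<le> i" "i + 1 \<le> n - 1"
  shows "comm n (sw i @ sw i) (cj (sw (i+1)) (xw a (i+1)))"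
proof -
  let ?g = "sw (i+1) @ sw i"
  have c0: "comm n (sw (i+1) @ sw (i+1)) (cj (sw (i+1)) (xw a i))"
  proof -
    have "comm n (sw (i+1)) (sw (i+1) @ sw (i+1))" by (simp add: comm_def br_eq.refl)
    then have "br_eq n (cj (sw (i+1)) (sw (i+1) @ sw (i+1))) (sw (i+1) @ sw (i+1))" by (rule comm_cj_eq)
    then show ?thesis using comm_cj2[OF Q1[OF assms], of "sw (i+1)"] by (rule comm_congL)
  qed
  have c1: "comm n (cj ?g (sw (i+1) @ sw (i+1))) (cj ?g (cj (sw (i+1)) (xw a i)))"
    by (rule comm_cj2[OF c0])
  have e1: "br_eq n (cj ?g (sw (i+1))) (sw i)"
    by (rule cj_of) (use br_eq.sym[OF braid[OF assms]] in simp)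
  have e2: "br_eq n (cj ?g (sw (i+1) @ sw (i+1))) (sw i @ sw i)"
    by (rule br_eq.trans[OF cj_app br_app[OF e1 e1]])
  have e3: "br_eq n (cj ?g (cj (sw (i+1)) (xw a i))) (cj (sw (i+1)) (xw a (i+1)))"
  proof -
    have "cj ?g (cj (sw (i+1)) (xw a i)) = cj (sw (i+1)) (cj (sw i @ sw (i+1)) (xw a i))"
      by (simp add: cj_def)
    then show ?thesis by (simp only:) (rule cj_cong[OF P3[OF assms]])
  qed
  show ?thesis using c1 e2 e3 by (meson comm_cong comm_congL)
qed



definition zw :: "'a::ring \<Rightarrow> nat \<Rightarrow> 'a brletter list" where "zw a r = cj (sw r) (xw a r)"
definition Zw :: "'a::ring \<Rightarrow> bool \<Rightarrow> nat \<Rightarrow> 'a brletter list" where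
  "Zw a b r = (if b then zw a r else xw a r)"
definition Dw :: "nat \<Rightarrow> nat \<Rightarrow> ('a::ring) brletter list" where
  "Dw p q = map (\<lambda>j. (False, j, 0)) [p..<q-1]"
definition W :: "'a::ring \<Rightarrow> bool \<Rightarrow> nat \<Rightarrow> nat \<Rightarrow> 'a brletter list" where
  "W a b p q = cj (Dw p q) (Zw a b (q-1))"

lemma cj_congg: "br_eq n g g' \<Longrightarrow> br_eq n (cj g Z) (cj g' Z)"
  unfolding cj_def by (intro br_app br_eq.refl inv_cong)

lemma cj_swap: "comm n g D \<Longrightarrow> br_eq n (cj g (cj D Z)) (cj D (cj g Z))"
  unfolding cj_append[symmetric] by (rule cj_congg) (simp add: comm_def)

lemma far_word: fixes w :: "('a::ring) brletter list"
  assumes "1 \<le> i" "i \<le> n - 1"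
  "\<And>l. l \<in> set w \<Longrightarrow> 1 \<le> fst (snd l) \<and> fst (snd l) \<le> n - 1 \<and> (i + 2 \<le> fst (snd l) \<or> fst (snd l) + 2 \<le> i)"
  shows "comm n (sw i :: 'a brletter list) w"
proof (rule comm_letters)
  fix x y :: "'a brletter" assume "x \<in> set (sw i)" "y \<in> set w"
  then show "comm n [x] [y]" using assms(3)[of y] assms(1,2)
    by (cases y) (auto intro!: comm_far)
qed

lemma set_inv_word: "set (inv_word w) = inv_letter ` set w"
  by (simp add: inv_word_def)

lemma Zw_idx: "l \<in> set (Zw a b r) \<Longrightarrow> fst (snd l) = r"
  by (cases b) (auto simp: Zw_def zw_def xw_def cj_def set_inv_word inv_letter_def)

lemma Dw_idx: "l \<in> set (Dw p q) \<Longrightarrow> p \<le> fst (snd l) \<and> fst (snd l) + 2 \<le> q"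
  by (auto simp: Dw_def)

lemma Dw_cons: "p + 1 < q \<Longrightarrow> Dw p q = sw p @ Dw (p+1) q"
  by (simp add: Dw_def upt_conv_Cons)

lemma Dw_snoc: "p + 1 < q \<Longrightarrow> Dw p q = Dw p (q-1) @ sw (q-2)"
proof -
  assume "p + 1 < q"
  then have "[p..<q-1] = [p..<q-2] @ [q-2]"
  proof -
    have e: "q - 1 = Suc (q - 2)" using \<open>p + 1 < q\<close> by arith
    have "p \<le> q - 2" using \<open>p + 1 < q\<close> by arith
    then show ?thesis unfolding e by (rule upt_Suc_append)
  qed
  then show ?thesis by (simp add: Dw_def numeral_2_eq_2)
qed

lemma Dw_nil[simp]: "Dw p (Suc p) = []" by (simp add: Dw_def)

lemma Dw_split: "p + 1 \<le> i \<Longrightarrow> i + 2 \<le> q \<Longrightarrow> Dw p q = Dw p i @ sw (i-1) @ sw i @ Dw (i+1) q"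
proof -
  assume a: "p + 1 \<le> i" "i + 2 \<le> q"
  have "[p..<q-1] = [p..<i-1] @ [i-1..<q-1]"
  proof -
    have e: "i - 1 + (q - 1 - (i - 1)) = q - 1" using a by simp
    have "p \<le> i - 1" using a by simp
    then show ?thesis using upt_add_eq_append[of p "i-1" "q-1-(i-1)"] unfolding e by simp
  qed
  moreover have "[i-1..<q-1] = (i-1) # i # [i+1..<q-1]"
    using a by (simp add: upt_conv_Cons)
  ultimately show ?thesis by (simp add: Dw_def)
qed

lemma comm_W: assumes "1 \<le> i" "i \<le> n - 1" "1 \<le> p" "p < q" "q \<le> n" "i + 2 \<le> p \<or> q + 1 \<le> i"
  shows "comm n (sw i) (W a b p q)"
  unfolding W_def
proof (rule comm_cj)
  show "comm n (sw i) (Dw p q)"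
    by (rule far_word) (use assms Dw_idx in fastforce)+
  show "comm n (sw i) (Zw a b (q - 1))"
    by (rule far_word) (use assms Zw_idx in fastforce)+
qed

lemma stepA: assumes "1 \<le> i" "i \<le> n - 1" "1 \<le> p" "p < q" "q \<le> n" "i + 2 \<le> p \<or> q + 1 \<le> i"
  shows "br_eq n (cj (sw i) (W a b p q)) (W a b p q)"
  by (rule comm_cj_eq[OF comm_W[OF assms]])

lemma stepC: assumes "i + 1 = p" "p < q"
  shows "cj (sw i) (W a b p q) = W a b i q"
  using assms by (simp add: W_def cj_append[symmetric] Dw_cons)

lemma braid_cj1: assumes "1 \<le> i" "i + 1 \<le> n - 1"
  shows "br_eq n (cj (sw (i+1) @ sw i) (sw (i+1))) (sw i)"
  by (rule cj_of) (use br_eq.sym[OF braid[OF assms]] in simp)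

lemma G: assumes "1 \<le> m" "m + 2 + k \<le> n"
  shows "comm n (sw m @ sw m) (W a b (m+1) (m+2+k))"
  using assms
proof (induction k arbitrary: m)
  case 0
  then have r: "1 \<le> m" "m + 1 \<le> n - 1" by auto
  show ?case
    using Q2[OF r, of a] Q3[OF r, of a]
    by (cases b) (simp_all add: W_def Zw_def zw_def numeral_2_eq_2)
next
  case (Suc k)
  let ?W = "W a b (m+2) (m+2+Suc k)"
  have eqW: "W a b (m+1) (m+2+Suc k) = cj (sw (m+1)) ?W"
    by (simp add: W_def cj_append[symmetric] Dw_cons)
  have IH: "comm n (sw (m+1) @ sw (m+1)) ?W"
    using Suc.IH[of "m+1"] Suc.prems by (simp add: add.commute add.left_commute)
  have A: "comm n (sw m) ?W"
    by (rule comm_W) (use Suc.prems in auto)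
  have c1: "comm n (cj (sw m) (sw (m+1) @ sw (m+1))) ?W"
    by (rule comm_cong[OF comm_cj_eq[OF A] comm_cj2[OF IH]])
  have c2: "comm n (cj (sw (m+1)) (cj (sw m) (sw (m+1) @ sw (m+1)))) (cj (sw (m+1)) ?W)"
    by (rule comm_cj2[OF c1])
  have r: "1 \<le> m" "m + 1 \<le> n - 1" using Suc.prems by auto
  have e: "br_eq n (cj (sw (m+1)) (cj (sw m) (sw (m+1) @ sw (m+1)))) (sw m @ sw m)"
    unfolding cj_append[symmetric]
    by (rule br_eq.trans[OF cj_app br_app[OF braid_cj1[OF r] braid_cj1[OF r]]])
  show ?case unfolding eqW using e c2 by (rule comm_congL)
qed

lemma stepD: assumes "1 \<le> p" "p + 1 < q" "q \<le> n"
  shows "br_eq n (cj (sw p) (W a b p q)) (W a b (p+1) q)"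
proof -
  have "cj (sw p) (W a b p q) = cj (sw p @ sw p) (W a b (p+1) q)"
    using assms by (simp add: W_def cj_append[symmetric] Dw_cons)
  also have "br_eq n \<dots> (W a b (p+1) q)"
  proof (rule comm_cj_eq)
    have qk: "q = p + 2 + (q - p - 2)" using assms by arith
    have "comm n (sw p @ sw p) (W a b (p+1) (p + 2 + (q - p - 2)))"
      by (rule G) (use assms qk in arith)+
    from this[folded qk] show "comm n (sw p @ sw p) (W a b (p+1) q)" .
  qed
  finally show ?thesis .
qed

lemma braid_move: assumes "1 \<le> p" "p + 1 \<le> i" "i + 2 \<le> q" "q \<le> n"
  shows "br_eq n (sw i @ Dw p q) (Dw p q @ sw (i-1))"
proof -
  let ?D1 = "Dw p i" and ?D2 = "Dw (i+1) q"
  have c1: "comm n (sw i) ?D1" by (rule far_word) (use assms Dw_idx in fastforce)+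
  have c2: "comm n (sw (i-1)) ?D2" by (rule far_word) (use assms Dw_idx in fastforce)+
  have r: "1 \<le> i - 1" "i - 1 + 1 \<le> n - 1" using assms by auto
  have ii: "i - 1 + 1 = i" using assms by auto
  have "sw i @ Dw p q = [] @ (sw i @ ?D1) @ (sw (i-1) @ sw i @ ?D2)"
    using assms by (simp add: Dw_split)
  also have "br_eq n \<dots> ([] @ (?D1 @ sw i) @ (sw (i-1) @ sw i @ ?D2))"
    by (rule br_eq.ctx) (use c1 in \<open>simp add: comm_def\<close>)
  also have "\<dots> = ?D1 @ (sw i @ sw (i-1) @ sw i) @ ?D2" by simp
  also have "br_eq n \<dots> (?D1 @ (sw (i-1) @ sw i @ sw (i-1)) @ ?D2)"
    by (rule br_eq.ctx) (use br_eq.sym[OF braid[OF r]] in \<open>simp only: ii\<close>)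
  also have "\<dots> = (?D1 @ sw (i-1) @ sw i) @ (sw (i-1) @ ?D2) @ []" by simp
  also have "br_eq n \<dots> ((?D1 @ sw (i-1) @ sw i) @ (?D2 @ sw (i-1)) @ [])"
    by (rule br_eq.ctx) (use c2 in \<open>simp add: comm_def\<close>)
  also have "\<dots> = Dw p q @ sw (i-1)" using assms by (simp add: Dw_split)
  finally show ?thesis .
qed

lemma stepE: assumes "1 \<le> p" "p + 1 \<le> i" "i + 2 \<le> q" "q \<le> n"
  shows "br_eq n (cj (sw i) (W a b p q)) (W a b p q)"
proof -
  have "cj (sw i) (W a b p q) = cj (sw i @ Dw p q) (Zw a b (q-1))"
    by (simp only: W_def cj_append)
  also have "br_eq n \<dots> (cj (Dw p q @ sw (i-1)) (Zw a b (q-1)))"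
    by (rule cj_congg[OF braid_move[OF assms]])
  also have "\<dots> = cj (Dw p q) (cj (sw (i-1)) (Zw a b (q-1)))" by (simp add: cj_append)
  also have "br_eq n \<dots> (W a b p q)" unfolding W_def
  proof (rule cj_cong, rule comm_cj_eq)
    show "comm n (sw (i-1)) (Zw a b (q-1))"
      by (rule far_word) (use assms Zw_idx in fastforce)+
  qed
  finally show ?thesis .
qed

lemma Zstep_down: assumes "1 \<le> j" "j + 1 \<le> n - 1"
  shows "br_eq n (cj (sw (j+1) @ sw j) (Zw a b (j+1))) (Zw a b j)"
proof (cases b)
  case False then show ?thesis using P4[OF assms] by (simp add: Zw_def)
next
  case True
  have "cj (sw (j+1) @ sw j) (Zw a b (j+1)) = cj (sw (j+1) @ sw j @ sw (j+1)) (xw a (j+1))"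
    using True by (simp add: Zw_def zw_def cj_append[symmetric])
  also have "br_eq n \<dots> (cj (sw j @ sw (j+1) @ sw j) (xw a (j+1)))"
    by (rule cj_congg[OF br_eq.sym[OF braid[OF assms]]])
  also have "\<dots> = cj (sw j) (cj (sw (j+1) @ sw j) (xw a (j+1)))" by (simp add: cj_append[symmetric])
  also have "br_eq n \<dots> (cj (sw j) (xw a j))" by (rule cj_cong[OF P4[OF assms]])
  finally show ?thesis using True by (simp add: Zw_def zw_def)
qed

lemma stepF: assumes "1 \<le> p" "p < i" "i + 1 = q" "q \<le> n"
  shows "br_eq n (cj (sw i) (W a b p q)) (W a b p i)"
proof -
  have D: "Dw p q = Dw p i @ sw (i-1)" using assms Dw_snoc[of p "i+1"] by auto
  have c: "comm n (sw i) (Dw p i)" by (rule far_word) (use assms Dw_idx in fastforce)+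
  have r: "1 \<le> i - 1" "i - 1 + 1 \<le> n - 1" using assms by auto
  have ii: "i - 1 + 1 = i" using assms by auto
  have qi: "q - 1 = i" using assms by simp
  have "cj (sw i) (W a b p q) = cj (sw i) (cj (Dw p i) (cj (sw (i-1)) (Zw a b i)))"
    unfolding W_def D qi by (simp add: cj_append)
  also have "br_eq n \<dots> (cj (Dw p i) (cj (sw i) (cj (sw (i-1)) (Zw a b i))))"
    by (rule cj_swap[OF c])
  also have "\<dots> = cj (Dw p i) (cj (sw (i-1+1) @ sw (i-1)) (Zw a b (i-1+1)))"
    unfolding ii by (simp add: cj_def)
  also have "br_eq n \<dots> (W a b p i)" unfolding W_def by (rule cj_cong[OF Zstep_down[OF r]])
  finally show ?thesis .
qed

lemma stepG: assumes "1 \<le> p" "p + 1 \<le> n - 1 \<or> p \<le> n - 1"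
  shows "br_eq n (cj (sw p) (W a b p (p+1))) (W a (\<not> b) p (p+1))"
proof (cases b)
  case False then show ?thesis by (simp add: W_def Zw_def zw_def br_eq.refl)
next
  case True
  have r: "1 \<le> p" "p \<le> n - 1" using assms by auto
  have "cj (sw p) (W a b p (p+1)) = cj (sw p @ sw p) (xw a p)"
    using True by (simp add: W_def Zw_def zw_def cj_def)
  also have "br_eq n \<dots> (xw a p)" by (rule comm_cj_eq[OF P2[OF r]])
  finally show ?thesis using True by (simp add: W_def Zw_def)
qed

lemma Zstep_up: assumes "1 \<le> j" "j + 1 \<le> n - 1"
  shows "br_eq n (cj (sw (j+1)) (Zw a b j)) (cj (sw j) (Zw a b (j+1)))"
proof (cases b)
  case False then show ?thesis using P5[OF assms] by (simp add: Zw_def)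
next
  case True
  have "cj (sw (j+1)) (Zw a b j) = cj (sw (j+1) @ sw j) (xw a j)"
    using True by (simp add: Zw_def zw_def cj_def)
  also have "br_eq n \<dots> (cj (sw (j+1) @ sw j) (cj (sw (j+1) @ sw (j+1)) (xw a j)))"
    by (rule cj_cong, rule br_eq.sym, rule comm_cj_eq[OF Q1[OF assms]])
  also have "\<dots> = cj ((sw (j+1) @ sw j @ sw (j+1)) @ sw (j+1)) (xw a j)" by (simp add: cj_append[symmetric])
  also have "br_eq n \<dots> (cj ((sw j @ sw (j+1) @ sw j) @ sw (j+1)) (xw a j))"
    by (rule cj_congg, rule br_appR, rule br_eq.sym[OF braid[OF assms]])
  also have "\<dots> = cj (sw j) (cj (sw (j+1)) (cj (sw j @ sw (j+1)) (xw a j)))" by (simp add: cj_append[symmetric])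
  also have "br_eq n \<dots> (cj (sw j) (cj (sw (j+1)) (xw a (j+1))))"
    by (rule cj_cong, rule cj_cong, rule P3[OF assms])
  finally show ?thesis using True by (simp add: Zw_def zw_def)
qed

lemma stepH: assumes "1 \<le> p" "p < q" "q \<le> n - 1"
  shows "br_eq n (cj (sw q) (W a b p q)) (W a b p (q+1))"
proof -
  have c: "comm n (sw q) (Dw p q)" by (rule far_word) (use assms Dw_idx in fastforce)+
  have r: "1 \<le> q - 1" "q - 1 + 1 \<le> n - 1" using assms by auto
  have qq: "q - 1 + 1 = q" using assms by auto
  have D: "Dw p (q+1) = Dw p q @ sw (q-1)" using assms Dw_snoc[of p "q+1"] by simp
  have "cj (sw q) (W a b p q) = cj (sw q) (cj (Dw p q) (Zw a b (q-1)))" by (simp add: W_def)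
  also have "br_eq n \<dots> (cj (Dw p q) (cj (sw q) (Zw a b (q-1))))" by (rule cj_swap[OF c])
  also have "br_eq n \<dots> (cj (Dw p q) (cj (sw (q-1)) (Zw a b q)))"
    by (rule cj_cong) (use Zstep_up[OF r, of a b] in \<open>simp only: qq\<close>)
  also have "\<dots> = W a b p (q+1)" unfolding W_def D by (simp add: cj_def)
  finally show ?thesis .
qed



definition Xw :: "'a::ring \<Rightarrow> nat \<Rightarrow> nat \<Rightarrow> 'a brletter list" where
  "Xw a p q = (if p < q then W a False p q else W a True q p)"

lemma combine:
  assumes "\<not> (p = i \<and> q = i + 1)" "transpose i (i+1) p = P'" "transpose i (i+1) q = Q'" "P' < Q'"
    "br_eq n (cj (sw i) (W a b p q)) (W a b P' Q')"
  shows "(p = i \<and> q = i + 1 \<longrightarrow> br_eq n (cj (sw i) (W a b p q)) (W a (\<not> b) p q))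
    \<and> (\<not> (p = i \<and> q = i + 1) \<longrightarrow> transpose i (i+1) p < transpose i (i+1) q \<and>
         br_eq n (cj (sw i) (W a b p q)) (W a b (transpose i (i+1) p) (transpose i (i+1) q)))"
  using assms by auto

lemma stepW: assumes "1 \<le> i" "i \<le> n - 1" "1 \<le> p" "p < q" "q \<le> n"
  shows "(p = i \<and> q = i + 1 \<longrightarrow> br_eq n (cj (sw i) (W a b p q)) (W a (\<not> b) p q))
    \<and> (\<not> (p = i \<and> q = i + 1) \<longrightarrow> transpose i (i+1) p < transpose i (i+1) q \<and>
         br_eq n (cj (sw i) (W a b p q)) (W a b (transpose i (i+1) p) (transpose i (i+1) q)))"
proof -
  consider "i + 2 \<le> p" | "i + 1 = p" | "i = p" "q = p + 1" | "i = p" "p + 1 < q"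
    | "p + 1 \<le> i" "i + 2 \<le> q" | "p < i" "i + 1 = q" | "i = q" | "q + 1 \<le> i"
    using assms by linarith
  then show ?thesis
  proof cases
    case 1
    show ?thesis
    proof (rule combine)
      show "transpose i (i+1) p = p" "transpose i (i+1) q = q" using 1 assms by (simp_all add: transpose_def)
    qed (use 1 assms stepA[OF assms, of a b] in simp_all)
  next
    case 2
    show ?thesis
    proof (rule combine)
      show "transpose i (i+1) p = i" "transpose i (i+1) q = q" using 2 assms by (simp_all add: transpose_def)
      show "br_eq n (cj (sw i) (W a b p q)) (W a b i q)" unfolding stepC[OF 2 assms(4)] by (rule br_eq.refl)
    qed (use 2 assms in simp_all)
  next
    case 3
    have r: "1 \<le> p" "p + 1 \<le> n - 1 \<or> p \<le> n - 1" using 3 assms by simp_all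
    show ?thesis using stepG[OF r, of a b] 3 by simp
  next
    case 4
    show ?thesis
    proof (rule combine)
      show "transpose i (i+1) p = p + 1" "transpose i (i+1) q = q" using 4 assms by (simp_all add: transpose_def)
      show "br_eq n (cj (sw i) (W a b p q)) (W a b (p+1) q)" using stepD[of p q n a b] 4 assms by simp
    qed (use 4 assms in simp_all)
  next
    case 5
    show ?thesis
    proof (rule combine)
      show "transpose i (i+1) p = p" "transpose i (i+1) q = q" using 5 assms by (simp_all add: transpose_def)
      show "br_eq n (cj (sw i) (W a b p q)) (W a b p q)" by (rule stepE) (use 5 assms in simp_all)
    qed (use 5 assms in simp_all)
  next
    case 6
    show ?thesis
    proof (rule combine)
      show "transpose i (i+1) p = p" "transpose i (i+1) q = i" using 6 assms by (simp_all add: transpose_def)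
      show "br_eq n (cj (sw i) (W a b p q)) (W a b p i)" by (rule stepF) (use 6 assms in simp_all)
    qed (use 6 assms in simp_all)
  next
    case 7
    show ?thesis
    proof (rule combine)
      show "transpose i (i+1) p = p" "transpose i (i+1) q = q + 1" using 7 assms by (simp_all add: transpose_def)
      show "br_eq n (cj (sw i) (W a b p q)) (W a b p (q+1))" using stepH[of p q n a b] 7 assms by simp
    qed (use 7 assms in simp_all)
  next
    case 8
    show ?thesis
    proof (rule combine)
      show "transpose i (i+1) p = p" "transpose i (i+1) q = q" using 8 assms by (simp_all add: transpose_def)
    qed (use 8 assms stepA[OF assms, of a b] in simp_all)
  qed
qed

lemma stepX: assumes "1 \<le> i" "i \<le> n - 1" "1 \<le> p" "p \<le> n" "1 \<le> q" "q \<le> n" "p \<noteq> q"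
  shows "br_eq n (cj (sw i) (Xw a p q)) (Xw a (transpose i (i+1) p) (transpose i (i+1) q))"
proof (cases "p < q")
  case True
  note s = stepW[OF assms(1,2,3) True assms(6), of a False]
  show ?thesis
  proof (cases "p = i \<and> q = i + 1")
    case True then show ?thesis using s by (auto simp: Xw_def)
  next
    case False then show ?thesis using s \<open>p < q\<close> by (auto simp: Xw_def)
  qed
next
  case False
  then have qp: "q < p" using assms by simp
  note s = stepW[OF assms(1,2,5) qp assms(4), of a True]
  show ?thesis
  proof (cases "q = i \<and> p = i + 1")
    case True then show ?thesis using s by (auto simp: Xw_def)
  next
    case False
    then show ?thesis using s qp by (auto simp: Xw_def)
  qed
qed

lemma stepX_inv: assumes "1 \<le> i" "i \<le> n - 1" "1 \<le> p" "p \<le> n" "1 \<le> q" "q \<le> n" "p \<noteq> q"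
  shows "br_eq n (cj [(True, i, 0)] (Xw a p q)) (Xw a (transpose i (i+1) p) (transpose i (i+1) q))"
proof -
  let ?t = "transpose i (i+1)"
  have r: "1 \<le> ?t p" "?t p \<le> n" "1 \<le> ?t q" "?t q \<le> n" "?t p \<noteq> ?t q"
    using assms by (auto simp: transpose_def)
  have "br_eq n (cj (sw i) (Xw a (?t p) (?t q))) (Xw a p q)"
    using stepX[OF assms(1,2) r, of a] unfolding transpose_involutory .
  then have "br_eq n (Xw a (?t p) (?t q)) (cj (inv_word (sw i)) (Xw a p q))" by (rule cj_move)
  moreover have "inv_word (sw i) = [(True, i, 0)]" by simp
  ultimately show ?thesis by (metis br_eq.sym)
qed

primrec Pw :: "(bool \<times> nat) list \<Rightarrow> nat \<Rightarrow> nat" where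
  "Pw [] = id"
| "Pw (l # w) = transpose (snd l) (snd l + 1) \<circ> Pw w"

lemma Pw_range: "braid_word n w \<Longrightarrow> 1 \<le> p \<Longrightarrow> p \<le> n \<Longrightarrow> 1 \<le> Pw w p \<and> Pw w p \<le> n"
  by (induction w) (auto simp: braid_word_def transpose_def)

lemma Pw_inj: "Pw w p = Pw w q \<Longrightarrow> p = q"
  by (induction w) (auto dest: transpose_eq_imp_eq)

lemma foldl_comp: fixes g :: "nat \<Rightarrow> nat" and w :: "(bool \<times> nat) list"
  shows "foldl (\<lambda>f x. transpose (snd x) (snd x + 1) \<circ> f) g w
   = foldl (\<lambda>f x. transpose (snd x) (snd x + 1) \<circ> f) id w \<circ> g"
proof (induction w arbitrary: g)
  case Nil then show ?case by simp
next
  case (Cons x w)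
  show ?case using Cons.IH[of "transpose (snd x) (snd x + 1) \<circ> g"] Cons.IH[of "transpose (snd x) (snd x + 1) \<circ> id"]
    by (simp add: comp_assoc)
qed

lemma braid_perm_Cons: "braid_perm (l # w) = braid_perm w \<circ> transpose (snd l) (snd l + 1)"
  unfolding braid_perm_def using foldl_comp[of "transpose (snd l) (snd l + 1)" w] by simp

lemma perm_Pw: "braid_perm w (Pw w x) = x"
  by (induction w arbitrary: x) (auto simp: braid_perm_Cons, simp add: braid_perm_def)

lemma Pw_perm: "Pw w (braid_perm w x) = x"
  by (induction w arbitrary: x) (auto simp: braid_perm_Cons, simp add: braid_perm_def)

lemma Pw_eq: "braid_perm w = braid_perm w' \<Longrightarrow> Pw w = Pw w'"
  by (metis Pw_perm perm_Pw ext)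

lemma main_ind: "braid_word n w \<Longrightarrow> 1 \<le> p \<Longrightarrow> p \<le> n \<Longrightarrow> 1 \<le> q \<Longrightarrow> q \<le> n \<Longrightarrow> p \<noteq> q \<Longrightarrow>
  br_eq n (cj (embed_braid w) (Xw a p q)) (Xw a (Pw w p) (Pw w q))"
proof (induction w)
  case Nil then show ?case by (simp add: embed_braid_def br_eq.refl)
next
  case (Cons l w)
  obtain e i where l: "l = (e, i)" by (cases l)
  have bw: "braid_word n w" and i: "1 \<le> i" "i \<le> n - 1" using Cons.prems l by (auto simp: braid_word_def)
  have IH: "br_eq n (cj (embed_braid w) (Xw a p q)) (Xw a (Pw w p) (Pw w q))"
    using Cons.IH[OF bw] Cons.prems by simp
  have r: "1 \<le> Pw w p" "Pw w p \<le> n" "1 \<le> Pw w q" "Pw w q \<le> n" "Pw w p \<noteq> Pw w q"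
    using Pw_range[OF bw] Pw_inj Cons.prems by blast+
  have E: "embed_braid (l # w) = [(e, i, 0)] @ embed_braid w" by (simp add: embed_braid_def l)
  have "cj (embed_braid (l # w)) (Xw a p q) = cj [(e, i, 0)] (cj (embed_braid w) (Xw a p q))"
    unfolding E cj_append ..
  also have "br_eq n \<dots> (cj [(e, i, 0)] (Xw a (Pw w p) (Pw w q)))" by (rule cj_cong[OF IH])
  also have "br_eq n \<dots> (Xw a (Pw (l # w) p) (Pw (l # w) q))"
  proof -
    have Pl: "Pw (l # w) x = transpose i (i+1) (Pw w x)" for x by (simp add: l)
    show ?thesis
    proof (cases e)
      case True
      then have "e = True" by simp
      then show ?thesis unfolding Pl by (simp only:) (rule stepX_inv[OF i r])
    next
      case False
      then have "e = False" by simp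
      then show ?thesis unfolding Pl by (simp only:) (rule stepX[OF i r])
    qed
  qed
  finally show ?case .
qed

lemma Xw_adj': "Xw a k (Suc k) = xw a k"
  by (simp add: Xw_def W_def Zw_def)

lemma Xw_adj: "Xw a k (k+1) = xw a k"
  by (simp add: Xw_def W_def Zw_def)

lemma conj_eq: "conj_word w k a = cj (embed_braid w) (Xw a k (k+1))"
  by (simp add: conj_word_def cj_def Xw_adj' xw_def)

theorem proposition2p4:
  fixes n k :: nat and a :: "'a::ring"
  assumes "n \<ge> 2" and "1 \<le> k" and "k \<le> n - 1"
  shows "(\<forall>w w'. braid_word n w \<and> braid_word n w' \<and> braid_perm w = braid_perm w'
            \<longrightarrow> br_eq n (conj_word w k a) (conj_word w' k a))
       \<and> (\<forall>w j. braid_word n w \<and> braid_perm w j = k \<and> braid_perm w (j + 1) = k + 1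
            \<longrightarrow> br_eq n (conj_word w k a) [(False, j, a), (True, j, 0)])"
proof (intro conjI allI impI)
  have kr: "1 \<le> k" "k \<le> n" "1 \<le> k + 1" "k + 1 \<le> n" "k \<noteq> k + 1" using assms by auto
  fix w w' :: "(bool \<times> nat) list"
  assume h: "braid_word n w \<and> braid_word n w' \<and> braid_perm w = braid_perm w'"
  have 1: "br_eq n (conj_word w k a) (Xw a (Pw w k) (Pw w (k+1)))"
    unfolding conj_eq by (rule main_ind[OF _ kr]) (use h in blast)
  have e: "Pw w' = Pw w" using Pw_eq[of w' w] h by simp
  have 2: "br_eq n (conj_word w' k a) (Xw a (Pw w k) (Pw w (k+1)))"
    unfolding conj_eq e[symmetric] by (rule main_ind[OF _ kr]) (use h in blast)
  show "br_eq n (conj_word w k a) (conj_word w' k a)"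
    by (rule br_eq.trans[OF 1 br_eq.sym[OF 2]])
next
  have kr: "1 \<le> k" "k \<le> n" "1 \<le> k + 1" "k + 1 \<le> n" "k \<noteq> k + 1" using assms by auto
  fix w :: "(bool \<times> nat) list" and j
  assume h: "braid_word n w \<and> braid_perm w j = k \<and> braid_perm w (j + 1) = k + 1"
  have pj: "Pw w k = j" "Pw w (k+1) = j + 1" using Pw_perm[of w j] Pw_perm[of w "j+1"] h by simp_all
  have "br_eq n (conj_word w k a) (Xw a (Pw w k) (Pw w (k+1)))"
    unfolding conj_eq by (rule main_ind[OF _ kr]) (use h in blast)
  then show "br_eq n (conj_word w k a) [(False, j, a), (True, j, 0)]"
    unfolding pj Xw_adj by (simp add: xw_def)
qed


end
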